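(* Let $k\ge2$ and $n\in\mathbb{Z}$ with $\mathcal{F}_{n,k}(x)$ not identically zero. Then there is a polynomial $P_{n,k}(y)\in\mathbb{Z}[y]$ with $P_{n,k}(0)\neq0$ such that $$\mathcal{F}_{n,k}(x)=x^{r_{n,k}}\,P_{n,k}(x^k).$$ In particular, if $r_{n,k}>0$ then $x=0$ is a root of $\mathcal{F}_{n,k}$ of multiplicity exactly $r_{n,k}$, and if $r_{n,k}=0$ then $x=0$ is not a root.
   Context: For $k\ge2$, the polynomials $\mathcal{F}_{n,k}(x)\in\mathbb{Z}[x]$ ($n\in\mathbb{Z}$) are defined by $\mathcal{F}_{1,k}=1$, $\mathcal{F}_{n,k}=0$ for $n=0,-1,\dots,-(k-2)$, and $\mathcal{F}_{n,k}(x)=\sum_{j=1}^{k}x^{k-j}\mathcal{F}_{n-j,k}(x)$ for all $n\in\mathbb{Z}$. This recurrence is used upwards for $n\ge2$, and downwards for $n\le-(k-1)$ as $\mathcal{F}_{n,k}=\mathcal{F}_{n+k,k}-\sum_{j=1}^{k-1}x^j\mathcal{F}_{n+j,k}$. The quantity $r_{n,k}\in\{0,\dots,k-1\}$ is defined as the residue of $(k-1)(n-1)$ modulo $k$ if $n>0$, and as the residue of $|n|+1$ modulo $k$ if $n\le0$. *)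

theory Defs
  imports "HOL-Computational_Algebra.Polynomial"
begin

text \<open>The polynomials F_{n,k}(x) in Z[x], for all integers n (meaningful for k >= 2;
  for k < 2 we set them to 0 to get a total function).\<close>

function Fpoly :: "nat \<Rightarrow> int \<Rightarrow> int poly" where
  "Fpoly k n =
     (if k < 2 then 0
      else if n = 1 then 1
      else if 2 - int k \<le> n \<and> n \<le> 0 then 0
      else if n \<ge> 2 then (\<Sum>j\<in>{1..k}. monom 1 (k - j) * Fpoly k (n - int j))
      else Fpoly k (n + int k) - (\<Sum>j\<in>{1..k-1}. monom 1 j * Fpoly k (n + int j)))"
  by pat_completeness auto
termination
  by (relation "measures [\<lambda>(k,n). if n \<ge> 2 - int k then 0 else 1,
                         \<lambda>(k,n). if n \<ge> 2 - int k then nat (n + int k) else nat (- n)]")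
     auto

definition rnk :: "int \<Rightarrow> nat \<Rightarrow> nat" where
  "rnk n k = (if n > 0 then nat (((int k - 1) * (n - 1)) mod int k)
              else nat ((\<bar>n\<bar> + 1) mod int k))"

end

theory Submission
  imports Defs
begin


declare Fpoly.simps[simp del]

lemma F1: "k \<ge> 2 \<Longrightarrow> Fpoly k 1 = 1"
  by (subst Fpoly.simps) simp
lemma F0: "k \<ge> 2 \<Longrightarrow> 2 - int k \<le> n \<Longrightarrow> n \<le> 0 \<Longrightarrow> Fpoly k n = 0"
  by (subst Fpoly.simps) simp
lemma Fup: "k \<ge> 2 \<Longrightarrow> n \<ge> 2 \<Longrightarrow> Fpoly k n = (\<Sum>j\<in>{1..k}. monom 1 (k - j) * Fpoly k (n - int j))"
  by (subst Fpoly.simps) simp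
lemma Fdown: "k \<ge> 2 \<Longrightarrow> n < 2 - int k \<Longrightarrow> Fpoly k n = Fpoly k (n + int k) - (\<Sum>j\<in>{1..k-1}. monom 1 j * Fpoly k (n + int j))"
  by (subst Fpoly.simps) simp

lemma R: assumes k: "k \<ge> 2"
  shows "Fpoly k n = (\<Sum>j\<in>{1..k}. monom 1 (k - j) * Fpoly k (n - int j))"
proof (cases "n \<ge> 2")
  case True then show ?thesis using Fup k by simp
next
  case False
  have d: "Fpoly k (n - int k) = Fpoly k n - (\<Sum>j\<in>{1..k-1}. monom 1 j * Fpoly k (n - int k + int j))"
    using Fdown[OF k, of "n - int k"] False by simp
  have s: "{1..k} = insert k {1..k-1}" using k by auto
  have r: "(\<Sum>j\<in>{1..k-1}. monom 1 (k - j) * Fpoly k (n - int j)) = (\<Sum>j\<in>{1..k-1}. monom 1 j * Fpoly k (n - int k + int j))"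
  proof (rule sum.reindex_bij_witness[of _ "\<lambda>j. k - j" "\<lambda>j. k - j"])
    fix a assume a: "a \<in> {1..k-1}"
    then have e: "int (k - a) = int k - int a" by (subst of_nat_diff) auto
    show "monom 1 (k - a) * Fpoly k (n - int k + int (k - a)) = monom 1 (k - a) * Fpoly k (n - int a)"
      using a by (simp add: e)
  qed auto
  show ?thesis unfolding s using k r by (simp add: d)
qed

lemma T: assumes k: "k \<ge> 2"
  shows "monom 1 1 * Fpoly k n - Fpoly k (n - 1) = monom 1 k * Fpoly k (n - 1) - Fpoly k (n - int k - 1)"
proof -
  have s1: "{1..k} = insert 1 {2..k}" using k by auto
  have s2: "{1..k} = insert k {1..k-1}" using k by auto
  have a0: "monom 1 1 * Fpoly k n = monom 1 1 * (monom 1 (k - 1) * Fpoly k (n - 1) + (\<Sum>j\<in>{2..k}. monom 1 (k - j) * Fpoly k (n - int j)))"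
    apply (subst R[OF k, of n]) unfolding s1 using k by simp
  have a1: "monom 1 1 * (monom 1 (k - 1) * Fpoly k (n - 1)) = monom (1::int) k * Fpoly k (n - 1)"
    using k by (simp add: mult.assoc[symmetric] mult_monom)
  have a2: "monom 1 1 * (\<Sum>j\<in>{2..k}. monom 1 (k - j) * Fpoly k (n - int j)) = (\<Sum>j\<in>{2..k}. monom 1 (k - j + 1) * Fpoly k (n - int j))"
    unfolding sum_distrib_left by (intro sum.cong) (auto simp: mult.assoc[symmetric] mult_monom)
  have a: "monom 1 1 * Fpoly k n = monom 1 k * Fpoly k (n - 1) + (\<Sum>j\<in>{2..k}. monom 1 (k - j + 1) * Fpoly k (n - int j))"
    using a0 a1 a2 by (simp add: distrib_left)
  have b: "Fpoly k (n - 1) = Fpoly k (n - int k - 1) + (\<Sum>j\<in>{1..k-1}. monom 1 (k - j) * Fpoly k (n - 1 - int j))"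
    apply (subst R[OF k, of "n-1"])
    unfolding s2 using k by (simp add: algebra_simps)
  have c: "(\<Sum>j\<in>{2..k}. monom 1 (k - j + 1) * Fpoly k (n - int j)) = (\<Sum>j\<in>{1..k-1}. monom 1 (k - j) * Fpoly k (n - 1 - int j))"
  proof (rule sum.reindex_bij_witness[of _ "\<lambda>j. j + 1" "\<lambda>j. j - 1"])
    fix a assume a: "a \<in> {2..k}"
    then have "2 \<le> a" "a \<le> k" by auto
    then have e: "k - (a - 1) = k - a + 1" and e2: "int (a - 1) = int a - 1" by (arith, simp add: of_nat_diff)
    show "monom 1 (k - (a - 1)) * Fpoly k (n - 1 - int (a - 1)) = monom 1 (k - a + 1) * Fpoly k (n - int a)"
      by (simp only: e e2) (simp add: algebra_simps)
  qed auto
  show ?thesis using a b c by (simp add: algebra_simps)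
qed

lemma Tdown: assumes k: "k \<ge> 2"
  shows "Fpoly k n = Fpoly k (n + int k) + monom 1 k * Fpoly k (n + int k) - monom 1 1 * Fpoly k (n + int k + 1)"
  using T[OF k, of "n + int k + 1"] by (simp add: algebra_simps)



lemma negpart: assumes k: "k \<ge> 2"
  shows "(e div k < e mod k \<longrightarrow> Fpoly k (1 - int e) = 0) \<and>
         (e mod k \<le> e div k \<longrightarrow> coeff (Fpoly k (1 - int e)) (e mod k) = (-1)^(e mod k) * int (e div k choose (e mod k)))"
proof (induction e rule: less_induct)
  case (less e)
  show ?case
  proof (cases "e < k")
    case True
    then have dm: "e div k = 0" "e mod k = e" by auto
    show ?thesis
    proof (cases "e = 0")
      case True then show ?thesis using F1[OF k] by simp
    next
      case False
      then have "Fpoly k (1 - int e) = 0" using F0[OF k] True by simp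
      then show ?thesis using dm False by simp
    qed
  next
    case False
    define e' where "e' = e - k"
    have ee: "e = e' + k" using False e'_def by simp
    have lt: "e' < e" using k ee by simp
    have dm': "e' div k = e div k - 1" "e' mod k = e mod k" "e div k \<ge> 1" using ee k by (auto simp: div_add_self2)
    note IH1 = less.IH[OF lt]
    have td: "Fpoly k (1 - int e) = Fpoly k (1 - int e') + monom 1 k * Fpoly k (1 - int e') - monom 1 1 * Fpoly k (2 - int e')"
      using Tdown[OF k, of "1 - int e"] ee by (simp add: algebra_simps)
    define r where "r = e mod k"
    define M where "M = e div k"
    have rk: "r < k" using k r_def by simp
    show ?thesis
    proof (cases "r = 0")
      case True
      have c: "coeff (Fpoly k (1 - int e)) 0 = coeff (Fpoly k (1 - int e')) 0"
        using td k by (simp add: coeff_monom_mult)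
      show ?thesis using IH1 c True dm' unfolding r_def by simp
    next
      case False
      define e'' where "e'' = e' - 1"
      have "e' \<noteq> 0" using False dm'(2) r_def by (metis mod_0)
      then have e'1: "e' = e'' + 1" using e''_def by simp
      have lt2: "e'' < e" using lt e'1 by simp
      note IH2 = less.IH[OF lt2]
      have dm'': "e'' mod k = r - 1" "e'' div k = M - 1"
      proof -
        have "e' = (e' div k) * k + e' mod k" by simp
        then have "e' = (M - 1) * k + r" using dm' r_def M_def by simp
        then have "e'' = (M - 1) * k + (r - 1)" using e''_def False by simp
        then show "e'' mod k = r - 1" "e'' div k = M - 1" using rk by auto
      qed
      have td2: "Fpoly k (1 - int e) = Fpoly k (1 - int e') + monom 1 k * Fpoly k (1 - int e') - monom 1 1 * Fpoly k (1 - int e'')"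
        using td e'1 by (simp add: algebra_simps)
      have c: "coeff (Fpoly k (1 - int e)) r = coeff (Fpoly k (1 - int e')) r - coeff (Fpoly k (1 - int e'')) (r - 1)"
        using td2 rk False by (simp add: coeff_monom_mult)
      show ?thesis
      proof (intro conjI impI)
        assume "e div k < e mod k"
        then have "M < r" using r_def M_def by simp
        then have "Fpoly k (1 - int e') = 0" "Fpoly k (1 - int e'') = 0"
          using IH1 IH2 dm' dm'' r_def M_def by auto
        then show "Fpoly k (1 - int e) = 0" using td2 by simp
      next
        assume "e mod k \<le> e div k"
        then have rM: "r \<le> M" using r_def M_def by simp
        have c1: "coeff (Fpoly k (1 - int e')) r = (-1)^r * int (M - 1 choose r)"
        proof (cases "r \<le> M - 1")
          case True then show ?thesis using IH1 dm' r_def M_def by simp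
        next
          case False
          then have "Fpoly k (1 - int e') = 0" using IH1 dm' r_def M_def by simp
          then show ?thesis using False by simp
        qed
        have c2: "coeff (Fpoly k (1 - int e'')) (r - 1) = (-1)^(r-1) * int (M - 1 choose (r - 1))"
          using IH2 dm'' rM by simp
        obtain b where b: "r = Suc b" using False not0_implies_Suc by blast
        obtain a where a: "M = Suc a" using rM b by (cases M) auto
        have bin: "M choose r = (M - 1 choose r) + (M - 1 choose (r - 1))"
          by (simp add: a b)
        have pw: "(-1::int)^(r-1) = - ((-1)^r)" by (simp add: b)
        have "coeff (Fpoly k (1 - int e)) r = (-1)^r * int (M - 1 choose r) + (-1)^r * int (M - 1 choose (r - 1))"
          using c c1 c2 pw by simp
        also have "\<dots> = (-1)^r * int (M choose r)" by (simp add: bin ring_distribs)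
        finally show "coeff (Fpoly k (1 - int e)) (e mod k) = (-1)^(e mod k) * int (e div k choose (e mod k))"
          by (simp add: r_def M_def)
      qed
    qed
  qed
qed



declare Fpoly.simps[simp del]

lemma up_ind:
  fixes b n :: int
  assumes step: "\<And>n. n \<ge> b \<Longrightarrow> (\<And>m. b \<le> m \<Longrightarrow> m < n \<Longrightarrow> P m) \<Longrightarrow> P n"
  shows "n \<ge> b \<Longrightarrow> P n"
proof (induction "nat (n - b)" arbitrary: n rule: less_induct)
  case (less n)
  show ?case
  proof (rule step[OF less.prems])
    fix m assume m: "b \<le> m" "m < n"
    then have "nat (m - b) < nat (n - b)" by simp
    then show "P m" using less.hyps m(1) by blast
  qed
qed

lemma down_ind:
  fixes b n :: int
  assumes base: "\<And>n. n \<ge> b \<Longrightarrow> P n"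
    and step: "\<And>n. n < b \<Longrightarrow> (\<And>m. m > n \<Longrightarrow> P m) \<Longrightarrow> P n"
  shows "P n"
proof (induction "nat (b - n)" arbitrary: n rule: less_induct)
  case (less n)
  show ?case
  proof (cases "n \<ge> b")
    case True then show ?thesis by (rule base)
  next
    case False
    show ?thesis
    proof (rule step)
      show "n < b" using False by simp
      fix m assume "m > n"
      show "P m"
      proof (cases "m \<ge> b")
        case True then show ?thesis by (rule base)
      next
        case False
        then have "nat (b - m) < nat (b - n)" using \<open>m > n\<close> by simp
        then show ?thesis by (rule less.hyps)
      qed
    qed
  qed
qed

lemma coeff_up: assumes k: "k \<ge> 2" and n: "n \<ge> 2"
  shows "coeff (Fpoly k n) d = (\<Sum>j\<in>{1..k}. if d < k - j then 0 else coeff (Fpoly k (n - int j)) (d - (k - j)))"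
proof -
  have e: "Fpoly k n = (\<Sum>j\<in>{1..k}. monom 1 (k - j) * Fpoly k (n - int j))" by (rule Fup[OF k n])
  show ?thesis unfolding e coeff_sum coeff_monom_mult by (intro sum.cong) auto
qed

lemma nonneg: assumes k: "k \<ge> 2" and n0: "n \<ge> 2 - int k" shows "coeff (Fpoly k n) d \<ge> 0"
proof -
  have "\<forall>d. coeff (Fpoly k n) d \<ge> 0"
  proof (rule up_ind[where b="2 - int k" and P="\<lambda>n. \<forall>d. coeff (Fpoly k n) d \<ge> 0", OF _ n0])
    fix n :: int assume n: "n \<ge> 2 - int k" and IH: "\<And>m. 2 - int k \<le> m \<Longrightarrow> m < n \<Longrightarrow> \<forall>d. coeff (Fpoly k m) d \<ge> 0"
    show "\<forall>d. coeff (Fpoly k n) d \<ge> 0"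
    proof
      fix d
      show "coeff (Fpoly k n) d \<ge> 0"
      proof (cases "n \<ge> 2")
        case True
        show ?thesis unfolding coeff_up[OF k True]
          by (rule sum_nonneg) (use IH True in auto)
      next
        case False
        then show ?thesis using F1[OF k] F0[OF k, of n] n by (cases "n = 1") (auto simp: coeff_1)
      qed
    qed
  qed
  then show ?thesis by blast
qed

definition rr :: "nat \<Rightarrow> int \<Rightarrow> nat" where "rr k n = nat ((1 - n) mod int k)"

lemma pos: assumes k: "k \<ge> 2" and n1: "n \<ge> 1" shows "coeff (Fpoly k n) (rr k n) > 0"
proof (rule up_ind[where b=1 and P="\<lambda>n. coeff (Fpoly k n) (rr k n) > 0", OF _ n1])
  fix n :: int assume n: "n \<ge> 1" and IH: "\<And>m. 1 \<le> m \<Longrightarrow> m < n \<Longrightarrow> coeff (Fpoly k m) (rr k m) > 0"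
  show "coeff (Fpoly k n) (rr k n) > 0"
  proof (cases "n \<ge> 2")
    case False
    then have "n = 1" using n by simp
    then show ?thesis using F1[OF k] by (simp add: rr_def)
  next
    case True
    let ?f = "\<lambda>j. if rr k n < k - j then 0 else coeff (Fpoly k (n - int j)) (rr k n - (k - j))"
    have nn: "\<forall>j\<in>{1..k}. 0 \<le> ?f j" using nonneg[OF k] True by auto
    show ?thesis
    proof (cases "n \<le> int k")
      case True
      define j0 where "j0 = nat (n - 1)"
      have j0: "j0 \<in> {1..k}" using True \<open>n \<ge> 2\<close> j0_def by auto
      have rn: "rr k n = k - j0"
      proof -
        have "(1 - n) mod int k = (1 - n + int k) mod int k" by simp
        also have "\<dots> = 1 - n + int k" by (rule mod_pos_pos_trivial) (use True \<open>n \<ge> 2\<close> in auto)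
        finally show ?thesis using j0_def True \<open>n \<ge> 2\<close> by (simp add: rr_def)
      qed
      have "?f j0 = 1" using rn j0 j0_def F1[OF k] \<open>n \<ge> 2\<close> by simp
      moreover have "?f j0 \<le> sum ?f {1..k}"
        by (rule member_le_sum) (use j0 nn in auto)
      ultimately show ?thesis unfolding coeff_up[OF k \<open>n \<ge> 2\<close>] by simp
    next
      case False
      have kk: "k \<in> {1..k}" using k by simp
      have "1 - (n - int k) = (1 - n) + int k" by simp
      then have rn: "rr k (n - int k) = rr k n" unfolding rr_def by (simp only: mod_add_self2)
      have "?f k > 0" using IH[of "n - int k"] False rn k by simp
      moreover have "?f k \<le> sum ?f {1..k}"
        by (rule member_le_sum) (use kk nn in auto)
      ultimately show ?thesis unfolding coeff_up[OF k \<open>n \<ge> 2\<close>] by simp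
    qed
  qed
qed



lemma dvd_shift: "(m::int) dvd a \<Longrightarrow> b = a + m * c \<Longrightarrow> m dvd b"
  by simp

lemma typ_up: assumes k: "k \<ge> 2" and n0: "n \<ge> 2 - int k"
  shows "\<forall>d. coeff (Fpoly k n) d \<noteq> 0 \<longrightarrow> int d mod int k = (1 - n) mod int k"
proof (rule up_ind[where b="2 - int k" and P="\<lambda>n. \<forall>d. coeff (Fpoly k n) d \<noteq> 0 \<longrightarrow> int d mod int k = (1 - n) mod int k", OF _ n0])
  fix n :: int assume n: "n \<ge> 2 - int k"
    and IH: "\<And>m. 2 - int k \<le> m \<Longrightarrow> m < n \<Longrightarrow> \<forall>d. coeff (Fpoly k m) d \<noteq> 0 \<longrightarrow> int d mod int k = (1 - m) mod int k"
  show "\<forall>d. coeff (Fpoly k n) d \<noteq> 0 \<longrightarrow> int d mod int k = (1 - n) mod int k"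
  proof (intro allI impI)
    fix d assume nz: "coeff (Fpoly k n) d \<noteq> 0"
    show "int d mod int k = (1 - n) mod int k"
    proof (cases "n \<ge> 2")
      case True
      from nz obtain j where j: "j \<in> {1..k}" and t: "(if d < k - j then 0 else coeff (Fpoly k (n - int j)) (d - (k - j))) \<noteq> 0"
        unfolding coeff_up[OF k True] by (rule sum.not_neutral_contains_not_neutral)
      from t have dj: "\<not> d < k - j" and c: "coeff (Fpoly k (n - int j)) (d - (k - j)) \<noteq> 0"
        by (auto split: if_splits)
      have "int (d - (k - j)) mod int k = (1 - (n - int j)) mod int k"
        using IH[of "n - int j"] j True c by auto
      then have h: "int k dvd int (d - (k - j)) - (1 - (n - int j))"
        by (simp only: mod_eq_dvd_iff)
      have e: "int (d - (k - j)) = int d - int k + int j" using dj j by (simp add: of_nat_diff)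
      have "int k dvd int d - (1 - n)" by (rule dvd_shift[OF h, where c=1]) (simp add: e algebra_simps)
      then show ?thesis by (simp add: mod_eq_dvd_iff)
    next
      case False
      show ?thesis
      proof (cases "n = 1")
        case True
        then show ?thesis using nz F1[OF k] by (simp add: coeff_1 split: if_splits)
      next
        case False
        then have "Fpoly k n = 0" using F0[OF k, of n] n \<open>\<not> n \<ge> 2\<close> by simp
        then show ?thesis using nz by simp
      qed
    qed
  qed
qed

lemma typ_all: assumes k: "k \<ge> 2"
  shows "\<forall>d. coeff (Fpoly k n) d \<noteq> 0 \<longrightarrow> int d mod int k = (1 - n) mod int k"
proof (rule down_ind[where b="2 - int k" and P="\<lambda>n. \<forall>d. coeff (Fpoly k n) d \<noteq> 0 \<longrightarrow> int d mod int k = (1 - n) mod int k"])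
  fix n :: int assume "n \<ge> 2 - int k"
  then show "\<forall>d. coeff (Fpoly k n) d \<noteq> 0 \<longrightarrow> int d mod int k = (1 - n) mod int k" by (rule typ_up[OF k])
next
  fix n :: int assume "n < 2 - int k"
    and IH: "\<And>m. m > n \<Longrightarrow> \<forall>d. coeff (Fpoly k m) d \<noteq> 0 \<longrightarrow> int d mod int k = (1 - m) mod int k"
  show "\<forall>d. coeff (Fpoly k n) d \<noteq> 0 \<longrightarrow> int d mod int k = (1 - n) mod int k"
  proof (intro allI impI)
    fix d assume nz: "coeff (Fpoly k n) d \<noteq> 0"
    have td: "Fpoly k n = Fpoly k (n + int k) + monom 1 k * Fpoly k (n + int k) - monom 1 1 * Fpoly k (n + int k + 1)"
      by (rule Tdown[OF k])
    have IH1: "\<And>d. coeff (Fpoly k (n + int k)) d \<noteq> 0 \<Longrightarrow> int k dvd int d - (1 - n)"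
    proof -
      fix d assume "coeff (Fpoly k (n + int k)) d \<noteq> 0"
      then have "int d mod int k = (1 - (n + int k)) mod int k" using IH[of "n + int k"] k by simp
      then have h: "int k dvd int d - (1 - (n + int k))" by (simp only: mod_eq_dvd_iff)
      show "int k dvd int d - (1 - n)" by (rule dvd_shift[OF h, where c="-1"]) (simp add: algebra_simps)
    qed
    have IH2: "\<And>d. coeff (Fpoly k (n + int k + 1)) d \<noteq> 0 \<Longrightarrow> int k dvd int d + 1 - (1 - n)"
    proof -
      fix d assume "coeff (Fpoly k (n + int k + 1)) d \<noteq> 0"
      then have "int d mod int k = (1 - (n + int k + 1)) mod int k" using IH[of "n + int k + 1"] k by simp
      then have h: "int k dvd int d - (1 - (n + int k + 1))" by (simp only: mod_eq_dvd_iff)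
      show "int k dvd int d + 1 - (1 - n)" by (rule dvd_shift[OF h, where c="-1"]) (simp add: algebra_simps)
    qed
    have "coeff (Fpoly k (n + int k)) d \<noteq> 0 \<or> (d \<ge> k \<and> coeff (Fpoly k (n + int k)) (d - k) \<noteq> 0)
        \<or> (d \<ge> 1 \<and> coeff (Fpoly k (n + int k + 1)) (d - 1) \<noteq> 0)"
      using nz unfolding td by (auto simp: coeff_monom_mult split: if_splits)
    then have "int k dvd int d - (1 - n)"
    proof (elim disjE conjE)
      assume "coeff (Fpoly k (n + int k)) d \<noteq> 0"
      then show ?thesis by (rule IH1)
    next
      assume a: "d \<ge> k" "coeff (Fpoly k (n + int k)) (d - k) \<noteq> 0"
      have h: "int k dvd int (d - k) - (1 - n)" by (rule IH1[OF a(2)])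
      show ?thesis by (rule dvd_shift[OF h, where c=1]) (use a(1) in \<open>simp add: of_nat_diff algebra_simps\<close>)
    next
      assume a: "d \<ge> 1" "coeff (Fpoly k (n + int k + 1)) (d - 1) \<noteq> 0"
      have h: "int k dvd int (d - 1) + 1 - (1 - n)" by (rule IH2[OF a(2)])
      show ?thesis by (rule dvd_shift[OF h, where c=0]) (use a(1) in \<open>simp add: of_nat_diff algebra_simps\<close>)
    qed
    then show "int d mod int k = (1 - n) mod int k" by (simp add: mod_eq_dvd_iff)
  qed
qed

lemma pcompose_monom': "pcompose (monom c i) q = smult c (q ^ i)"
  by (induction i) (simp_all add: monom_0 monom_Suc pcompose_pCons)

lemma decomp:
  fixes F :: "int poly"
  assumes k: "0 < k" and r: "r < k" and ty: "\<forall>d. coeff F d \<noteq> 0 \<longrightarrow> d mod k = r"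
  shows "\<exists>P. poly P 0 = coeff F r \<and> F = monom 1 r * pcompose P (monom 1 k)"
proof -
  define N where "N = degree F"
  define P where "P = (\<Sum>i\<le>N. monom (coeff F (r + k * i)) i)"
  have p0: "poly P 0 = coeff F r"
    unfolding P_def by (simp add: poly_sum poly_monom sum.atMost_shift zero_power)
  have "monom 1 r * pcompose P (monom 1 k) = (\<Sum>i\<le>N. monom (coeff F (r + k * i)) (r + k * i))"
    unfolding P_def pcompose_sum pcompose_monom' sum_distrib_left
    by (intro sum.cong) (auto simp: monom_power smult_monom mult_monom mult.commute)
  also have "\<dots> = F"
  proof (rule poly_eqI)
    fix d
    show "coeff (\<Sum>i\<le>N. monom (coeff F (r + k * i)) (r + k * i)) d = coeff F d"
    proof (cases "d mod k = r \<and> d div k \<le> N")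
      case True
      have eq: "\<And>i. (r + k * i = d) = (i = d div k)"
        using True k by (metis div_mult_self2 div_less r add.commute mult.commute nat_neq_iff mult_div_mod_eq add_0 not_gr_zero)
      have "coeff (\<Sum>i\<le>N. monom (coeff F (r + k * i)) (r + k * i)) d = (\<Sum>i\<le>N. if i = d div k then coeff F (r + k * i) else 0)"
        unfolding coeff_sum coeff_monom by (intro sum.cong) (auto simp: eq)
      also have "\<dots> = coeff F (r + k * (d div k))" using True by simp
      also have "r + k * (d div k) = d" using True by (metis add.commute mult_div_mod_eq)
      finally show ?thesis .
    next
      case False
      have c0: "coeff F d = 0"
      proof (rule ccontr)
        assume nz: "coeff F d \<noteq> 0"
        then have "d mod k = r" using ty by blast
        moreover have "d \<le> N" using nz N_def le_degree by blast
        then have "d div k \<le> N" using div_le_dividend le_trans by blast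
        ultimately show False using False by blast
      qed
      have "coeff (\<Sum>i\<le>N. monom (coeff F (r + k * i)) (r + k * i)) d = 0"
        unfolding coeff_sum coeff_monom
      proof (intro sum.neutral ballI)
        fix i assume i: "i \<in> {..N}"
        show "(if r + k * i = d then coeff F (r + k * i) else 0) = 0"
        proof (cases "r + k * i = d")
          case True
          then have "d mod k = r" "d div k = i" using r k by auto
          then show ?thesis using False i by auto
        qed simp
      qed
      then show ?thesis using c0 by simp
    qed
  qed
  finally show ?thesis using p0 by metis
qed



lemma rnk_eq: assumes k: "k \<ge> 2" shows "rnk n k = rr k n"
proof (cases "n > 0")
  case True
  have "int k dvd (int k - 1) * (n - 1) - (1 - n)"
  proof -
    have "(int k - 1) * (n - 1) - (1 - n) = int k * (n - 1)" by (simp add: algebra_simps)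
    then show ?thesis by simp
  qed
  then have "((int k - 1) * (n - 1)) mod int k = (1 - n) mod int k" by (simp only: mod_eq_dvd_iff)
  then show ?thesis using True by (simp add: rnk_def rr_def)
next
  case False
  then have "\<bar>n\<bar> + 1 = 1 - n" by simp
  then show ?thesis using False by (simp add: rnk_def rr_def)
qed

lemma low: assumes k: "k \<ge> 2" and nz: "Fpoly k n \<noteq> 0" shows "coeff (Fpoly k n) (rr k n) \<noteq> 0"
proof (cases "n \<ge> 1")
  case True then show ?thesis using pos[OF k True] by simp
next
  case False
  define e where "e = nat (1 - n)"
  have ne: "n = 1 - int e" using False e_def by simp
  have re: "rr k n = e mod k" unfolding rr_def ne by (simp add: zmod_int[symmetric])
  note np = negpart[OF k, of e]
  have "\<not> e div k < e mod k" using np nz ne by auto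
  then have "e mod k \<le> e div k" by simp
  then have "coeff (Fpoly k n) (e mod k) = (-1)^(e mod k) * int (e div k choose (e mod k))"
    and "(e div k choose (e mod k)) \<noteq> 0" using np ne by (auto simp: binomial_eq_0_iff)
  then show ?thesis using re by simp
qed

theorem mainTheorem12:
  fixes k :: nat and n :: int
  assumes "k \<ge> 2" and "Fpoly k n \<noteq> 0"
  shows "(\<exists>P :: int poly. poly P 0 \<noteq> 0 \<and>
            Fpoly k n = monom 1 (rnk n k) * pcompose P (monom 1 k))
         \<and> (rnk n k > 0 \<longrightarrow> order 0 (Fpoly k n) = rnk n k)
         \<and> (rnk n k = 0 \<longrightarrow> poly (Fpoly k n) 0 \<noteq> 0)"
proof -
  note k = assms(1)
  define r where "r = rnk n k"
  have rr: "r = rr k n" using rnk_eq[OF k] r_def by simp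
  have rk: "r < k" unfolding rr rr_def using k by (simp add: nat_less_iff)
  have ty: "\<forall>d. coeff (Fpoly k n) d \<noteq> 0 \<longrightarrow> d mod k = r"
  proof (intro allI impI)
    fix d assume "coeff (Fpoly k n) d \<noteq> 0"
    then have "int d mod int k = (1 - n) mod int k" using typ_all[OF k] by blast
    then show "d mod k = r" unfolding rr rr_def by (simp add: zmod_int[symmetric])
  qed
  obtain P where P0: "poly P 0 = coeff (Fpoly k n) r" and FP: "Fpoly k n = monom 1 r * pcompose P (monom 1 k)"
    using decomp[of k r "Fpoly k n"] k rk ty by auto
  have c: "coeff (Fpoly k n) r \<noteq> 0" using low[OF k assms(2)] rr by simp
  have P0': "poly P 0 \<noteq> 0" using P0 c by simp
  define Q where "Q = pcompose P (monom (1::int) k)"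
  have Q0: "poly Q 0 \<noteq> 0" unfolding Q_def using P0' k by (simp add: poly_pcompose poly_monom zero_power)
  have ord: "order 0 (Fpoly k n) = r"
  proof -
    have m: "monom (1::int) r = [:-0, 1:] ^ r" by (simp add: monom_altdef)
    have "order 0 (Fpoly k n) = order 0 (monom 1 r) + order 0 Q"
      using FP assms(2) unfolding Q_def by (simp add: order_mult)
    moreover have "order 0 (monom (1::int) r) = r" unfolding m by (rule order_power_n_n)
    moreover have "order 0 Q = 0" using Q0 order_root by blast
    ultimately show ?thesis by simp
  qed
  have pz: "r = 0 \<Longrightarrow> poly (Fpoly k n) 0 \<noteq> 0" using c by (simp add: poly_0_coeff_0)
  show ?thesis using P0' FP ord pz unfolding r_def by blast
qed

end
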